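(* Let $A,B\in\mathcal{B}(\mathcal{H})$. Then for every $n\in\mathbb{N}$, \begin{equation*} w\left(\begin{bmatrix} 0 &A \\ B& 0 \end{bmatrix}\right)\geq \sqrt[2n]{\max\{w((AB)^n),w((BA)^n)\}}. \end{equation*}
   Context: $\mathcal{H}$ is a complex Hilbert space and $\mathcal{B}(\mathcal{H})$ is the $C^*$-algebra of all bounded linear operators on $\mathcal{H}$. For $T\in\mathcal{B}(\mathcal{H})$, $w(T)=\sup\{|\langle Tx,x\rangle|:\|x\|=1\}$ is the numerical radius. A $2\times 2$ operator matrix with entries in $\mathcal{B}(\mathcal{H})$ is regarded as an operator on $\mathcal{H}\oplus\mathcal{H}$. *)

theory Defs
  imports "HOL-Analysis.Analysis"
begin

text \<open>Complex Hilbert spaces (not available in the distribution libraries):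
  a real Banach space carrying a complex scalar multiplication compatible with the
  real one and a complex inner product (linear in the first argument) inducing the norm.\<close>

class complex_hilbert = banach +
  fixes scaleC :: "complex \<Rightarrow> 'a \<Rightarrow> 'a"
    and cinner :: "'a \<Rightarrow> 'a \<Rightarrow> complex"
  assumes scaleC_add_right: "scaleC a (x + y) = scaleC a x + scaleC a y"
    and scaleC_add_left: "scaleC (a + b) x = scaleC a x + scaleC b x"
    and scaleC_scaleC: "scaleC a (scaleC b x) = scaleC (a * b) x"
    and scaleC_one: "scaleC 1 x = x"
    and scaleR_scaleC: "scaleR r x = scaleC (complex_of_real r) x"
    and cinner_commute: "cinner x y = cnj (cinner y x)"
    and cinner_add_left: "cinner (x + y) z = cinner x z + cinner y z"
    and cinner_scaleC_left: "cinner (scaleC c x) y = c * cinner x y"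
    and cinner_self_real_nonneg: "Im (cinner x x) = 0 \<and> 0 \<le> Re (cinner x x)"
    and cinner_self_eq_zero: "cinner x x = 0 \<longleftrightarrow> x = 0"
    and norm_eq_sqrt_cinner: "norm x = sqrt (Re (cinner x x))"

definition bounded_op :: "('a::complex_hilbert \<Rightarrow> 'a) \<Rightarrow> bool" where
  "bounded_op T \<longleftrightarrow>
     (\<forall>x y. T (x + y) = T x + T y) \<and> (\<forall>c x. T (scaleC c x) = scaleC c (T x)) \<and>
     (\<exists>K. \<forall>x. norm (T x) \<le> K * norm x)"

text \<open>Numerical radius w(T) = sup { |<Tx,x>| : ||x|| = 1 }; 0 is inserted so that w = 0 on the zero space (all values are nonnegative, so otherwise the sup is unchanged).\<close>
definition numrad :: "('a::complex_hilbert \<Rightarrow> 'a) \<Rightarrow> real" where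
  "numrad T = Sup (insert 0 {cmod (cinner (T x) x) | x. norm x = 1})"

text \<open>Operators on H \<oplus> H, modelled as maps on pairs; the inner product on H \<oplus> H is
  <(x1,x2),(y1,y2)> = <x1,y1> + <x2,y2>, and the norm is sqrt(||x1||^2 + ||x2||^2).\<close>
definition cinner_sum :: "'a::complex_hilbert \<times> 'a \<Rightarrow> 'a \<times> 'a \<Rightarrow> complex" where
  "cinner_sum p q = cinner (fst p) (fst q) + cinner (snd p) (snd q)"

definition norm_sum :: "'a::complex_hilbert \<times> 'a \<Rightarrow> real" where
  "norm_sum p = sqrt ((norm (fst p))\<^sup>2 + (norm (snd p))\<^sup>2)"

definition numrad_sum :: "('a::complex_hilbert \<times> 'a \<Rightarrow> 'a \<times> 'a) \<Rightarrow> real" where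
  "numrad_sum M = Sup (insert 0 {cmod (cinner_sum (M p) p) | p. norm_sum p = 1})"

definition opmat :: "('a::complex_hilbert \<Rightarrow> 'a) \<Rightarrow> ('a \<Rightarrow> 'a) \<Rightarrow> ('a \<Rightarrow> 'a) \<Rightarrow> ('a \<Rightarrow> 'a)
    \<Rightarrow> 'a \<times> 'a \<Rightarrow> 'a \<times> 'a" where
  "opmat P Q R S = (\<lambda>(x, y). (P x + Q y, R x + S y))"

end

theory Submission
  imports Defs
begin

lemma cinner_zero_left[simp]: "cinner 0 y = 0"
proof -
  have "cinner (0 + 0) y = cinner 0 y + cinner 0 y" by (rule cinner_add_left)
  then show ?thesis by simp
qed

lemma cinner_zero_right[simp]: "cinner x 0 = 0"
  by (metis cinner_commute cinner_zero_left complex_cnj_zero)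

lemma cinner_add_right: "cinner x (y + z) = cinner x y + cinner x z"
  by (metis cinner_commute cinner_add_left complex_cnj_add)

lemma cinner_scaleC_right: "cinner x (scaleC c y) = cnj c * cinner x y"
  by (metis cinner_commute cinner_scaleC_left complex_cnj_mult complex_cnj_cnj)

lemma cinner_diff_left: "cinner (x - y) z = cinner x z - cinner y z"
  by (metis cinner_add_left diff_add_cancel eq_diff_eq)

lemma cinner_diff_right: "cinner x (y - z) = cinner x y - cinner x z"
  by (metis cinner_add_right diff_add_cancel eq_diff_eq)

lemma cinner_sum_left: "cinner (\<Sum>k\<in>K. f k) y = (\<Sum>k\<in>K. cinner (f k) y)"
  by (induction K rule: infinite_finite_induct) (auto simp: cinner_add_left)

lemma cinner_sum_right: "cinner y (\<Sum>k\<in>K. f k) = (\<Sum>k\<in>K. cinner y (f k))"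
  by (induction K rule: infinite_finite_induct) (auto simp: cinner_add_right)

lemma scaleC_zero_left[simp]: "scaleC 0 x = 0"
  by (metis add_cancel_right_right scaleC_add_left add_0)

lemma scaleC_zero_right[simp]: "scaleC c 0 = 0"
  by (metis add_cancel_right_right scaleC_add_right add_0)

lemma scaleC_sum_left: "(\<Sum>k\<in>K. scaleC (f k) x) = scaleC (\<Sum>k\<in>K. f k) x"
  by (induction K rule: infinite_finite_induct) (auto simp: scaleC_add_left)

lemma scaleC_sum_right: "scaleC c (\<Sum>k\<in>K. f k) = (\<Sum>k\<in>K. scaleC c (f k))"
  by (induction K rule: infinite_finite_induct) (auto simp: scaleC_add_right)

lemma cinner_self_norm: "cinner x x = complex_of_real ((norm x)\<^sup>2)"
proof -
  have "Im (cinner x x) = 0" "0 \<le> Re (cinner x x)" using cinner_self_real_nonneg by auto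
  moreover have "(norm x)\<^sup>2 = Re (cinner x x)" using calculation by (simp add: norm_eq_sqrt_cinner[of x])
  ultimately show ?thesis by (simp add: complex_eq_iff)
qed

lemma cinner_scaleR_left: "cinner (scaleR r x) y = complex_of_real r * cinner x y"
  by (simp add: scaleR_scaleC cinner_scaleC_left)

lemma cinner_scaleR_right: "cinner x (scaleR r y) = complex_of_real r * cinner x y"
  by (simp add: scaleR_scaleC cinner_scaleC_right)

lemma cinner_unit_bound:
  assumes "norm x = 1"
  shows "cmod (cinner u x) \<le> norm u"
proof -
  define c where "c = cinner u x"
  have "cinner (u - scaleC c x) (u - scaleC c x)
      = cinner u u - cnj c * cinner u x - c * cinner x u + c * cnj c * cinner x x"
    by (simp add: cinner_diff_left cinner_diff_right cinner_scaleC_left cinner_scaleC_right algebra_simps)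
  also have "\<dots> = cinner u u - c * cnj c"
    using assms by (simp add: cinner_self_norm c_def cinner_commute[of x u])
  finally have "0 \<le> Re (cinner u u - c * cnj c)"
    using cinner_self_real_nonneg by metis
  then have "cmod c ^ 2 \<le> norm u ^ 2"
    by (simp add: cinner_self_norm flip: complex_norm_square)
  then show ?thesis unfolding c_def using power2_le_imp_le by fastforce
qed

section \<open>The direct sum as a complex Hilbert space\<close>

instantiation prod :: (complex_hilbert, complex_hilbert) complex_hilbert
begin
definition scaleC_prod_def: "scaleC c p = (scaleC c (fst p), scaleC c (snd p))"
definition cinner_prod_def: "cinner p q = cinner (fst p) (fst q) + cinner (snd p) (snd q)"
instance
proof
  fix a b :: complex and x y z :: "'a \<times> 'b" and r :: real
  show "scaleC a (x + y) = scaleC a x + scaleC a y"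
    by (simp add: scaleC_prod_def scaleC_add_right)
  show "scaleC (a + b) x = scaleC a x + scaleC b x"
    by (simp add: scaleC_prod_def scaleC_add_left)
  show "scaleC a (scaleC b x) = scaleC (a * b) x"
    by (simp add: scaleC_prod_def scaleC_scaleC)
  show "scaleC 1 x = x"
    by (simp add: scaleC_prod_def scaleC_one)
  show "scaleR r x = scaleC (complex_of_real r) x"
    by (simp add: scaleC_prod_def scaleR_scaleC prod_eq_iff)
  show "cinner x y = cnj (cinner y x)"
    by (simp add: cinner_prod_def cinner_commute[of "fst x"] cinner_commute[of "snd x"])
  show "cinner (x + y) z = cinner x z + cinner y z"
    by (simp add: cinner_prod_def cinner_add_left)
  show "cinner (scaleC a x) y = a * cinner x y"
    by (simp add: cinner_prod_def scaleC_prod_def cinner_scaleC_left algebra_simps)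
  show "Im (cinner x x) = 0 \<and> 0 \<le> Re (cinner x x)"
    using cinner_self_real_nonneg[of "fst x"] cinner_self_real_nonneg[of "snd x"]
    by (simp add: cinner_prod_def)
  show "(cinner x x = 0) = (x = 0)"
  proof
    assume h: "cinner x x = 0"
    have "cinner (fst x) (fst x) = 0 \<and> cinner (snd x) (snd x) = 0"
      using h cinner_self_real_nonneg[of "fst x"] cinner_self_real_nonneg[of "snd x"]
      by (simp add: cinner_prod_def complex_eq_iff)
    then show "x = 0" by (simp add: cinner_self_eq_zero prod_eq_iff)
  qed (simp add: cinner_prod_def)
  show "norm x = sqrt (Re (cinner x x))"
    by (simp add: norm_prod_def cinner_prod_def cinner_self_norm)
qed
end


definition lin :: "('b::complex_hilbert \<Rightarrow> 'b) \<Rightarrow> bool" where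
  "lin T \<longleftrightarrow> (\<forall>x y. T (x + y) = T x + T y) \<and> (\<forall>c x. T (scaleC c x) = scaleC c (T x))"

lemma lin_add: "lin T \<Longrightarrow> T (x + y) = T x + T y" by (simp add: lin_def)
lemma lin_scaleC: "lin T \<Longrightarrow> T (scaleC c x) = scaleC c (T x)" by (simp add: lin_def)
lemma lin_zero: "lin T \<Longrightarrow> T 0 = 0"
  by (metis lin_scaleC scaleC_zero_left)
lemma lin_diff: "lin T \<Longrightarrow> T (x - y) = T x - T y"
  by (metis lin_add diff_add_cancel eq_diff_eq)
lemma lin_sum: "lin T \<Longrightarrow> T (\<Sum>k\<in>K. f k) = (\<Sum>k\<in>K. T (f k))"
  by (induction K rule: infinite_finite_induct) (auto simp: lin_add lin_zero)
lemma lin_scaleR: "lin T \<Longrightarrow> T (scaleR r x) = scaleR r (T x)"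
  by (simp add: scaleR_scaleC lin_scaleC)
lemma lin_funpow: "lin T \<Longrightarrow> lin (T ^^ m)"
  by (induction m) (auto simp: lin_def)

lemma root_unity_sum:
  fixes n m :: nat
  assumes "0 < m" "m < n"
  shows "(\<Sum>k<n. (cis (2 * pi / n) ^ m) ^ k) = 0"
proof -
  let ?q = "cis (2 * pi / n) ^ m"
  have qn: "?q ^ n = 1"
  proof -
    have "?q ^ n = cis (real n * (real m * (2 * pi / n)))"
      by (simp add: Complex.DeMoivre flip: power_mult)
    also have "real n * (real m * (2 * pi / n)) = 2 * pi * real m" using assms by simp
    finally show ?thesis by simp
  qed
  have q1: "?q \<noteq> 1"
  proof
    assume "?q = 1"
    then have "cis (real m * (2 * pi / n)) = 1" by (simp add: Complex.DeMoivre)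
    then have "cos (real m * (2 * pi / n)) = 1" by (metis cis.sel(1) one_complex.sel(1))
    then obtain j :: int where j: "real m * (2 * pi / n) = real_of_int j * 2 * pi"
      using cos_one_2pi_int by blast
    then have "real m / n = j" using assms by (simp add: field_simps)
    moreover have "0 < real m / n" "real m / n < 1" using assms by auto
    ultimately show False by (metis of_int_0_less_iff of_int_less_1_iff not_le zero_less_iff_neq_zero
        int_one_le_iff_zero_less linorder_not_less of_int_less_iff less_le_not_le)
  qed
  show ?thesis using qn q1 by (simp add: sum_gp_strict)
qed


lemma re_part_nonneg:
  fixes T :: "'b::complex_hilbert \<Rightarrow> 'b"
  assumes r: "0 < r" and bnd: "\<And>y. cmod (cinner (T y) y) \<le> r * (norm y)\<^sup>2"
    and b: "cmod b = 1" and z: "cmod z = 1"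
  shows "0 \<le> Re (cinner (y - scaleC b (scaleC (z / complex_of_real r) (T y))) y)"
proof -
  have e: "cinner (y - scaleC b (scaleC (z / complex_of_real r) (T y))) y
      = cinner y y - (b * z / complex_of_real r) * cinner (T y) y"
    by (simp add: cinner_diff_left cinner_scaleC_left)
  have "Re ((b * z / complex_of_real r) * cinner (T y) y) \<le> cmod ((b * z / complex_of_real r) * cinner (T y) y)"
    by (rule complex_Re_le_cmod)
  also have "\<dots> = cmod (cinner (T y) y) / r"
    using b z r by (simp add: norm_mult norm_divide)
  also have "\<dots> \<le> (norm y)\<^sup>2" using bnd[of y] r by (simp add: divide_le_eq mult.commute)
  finally show ?thesis unfolding e by (simp add: cinner_self_norm)
qed

lemma power_ineq_pos:
  fixes T :: "'b::complex_hilbert \<Rightarrow> 'b"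
  assumes lin: "lin T" and r: "0 < r"
    and bnd: "\<And>y. cmod (cinner (T y) y) \<le> r * (norm y)\<^sup>2" and n: "1 \<le> n"
  shows "cmod (cinner ((T ^^ n) x) x) \<le> r ^ n * (norm x)\<^sup>2"
proof -
  define c where "c = cinner ((T ^^ n) x) x"
  define z where "z = cis (- Arg c / n)"
  define a where "a = z / complex_of_real r"
  define S where "S = (\<lambda>y. scaleC a (T y))"
  define w where "w = cis (2 * pi / n)"
  define Y where "Y = (\<lambda>k. \<Sum>m<n. scaleC (w ^ (k * m)) ((S ^^ m) x))"
  have linS: "lin S" using lin
    by (simp add: lin_def S_def scaleC_add_right scaleC_scaleC mult.commute)
  have Spow: "(S ^^ m) y = scaleC (a ^ m) ((T ^^ m) y)" for m y
  proof (induction m)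
    case 0 then show ?case by (simp add: scaleC_one)
  next
    case (Suc m)
    have "lin (T ^^ m)" using lin by (rule lin_funpow)
    then show ?case using Suc lin
      by (simp add: S_def lin_scaleC scaleC_scaleC)
  qed
  have wn: "w ^ n = 1"
  proof -
    have "w ^ n = cis (real n * (2 * pi / n))" by (simp add: w_def Complex.DeMoivre)
    also have "real n * (2 * pi / n) = 2 * pi * real (1::nat)" using n by simp
    finally show ?thesis by simp
  qed
  have normw: "cmod (w ^ k) = 1" for k by (simp add: w_def norm_power)
  have normz: "cmod z = 1" by (simp add: z_def)
  have tele: "Y k - scaleC (w ^ k) (S (Y k)) = x - (S ^^ n) x" for k
  proof -
    define f where "f = (\<lambda>m. scaleC (w ^ (k * m)) ((S ^^ m) x))"
    have "scaleC (w ^ k) (S (Y k)) = (\<Sum>m<n. f (Suc m))"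
      by (simp add: Y_def f_def lin_sum[OF linS] lin_scaleC[OF linS] scaleC_sum_right
          scaleC_scaleC power_add)
    moreover have "Y k = (\<Sum>m<n. f m)" by (simp add: Y_def f_def)
    ultimately have "Y k - scaleC (w ^ k) (S (Y k)) = (\<Sum>m<n. f m - f (Suc m))"
      by (simp add: sum_subtractf)
    also have "\<dots> = f 0 - f n" by (rule sum_lessThan_telescope')
    also have "f 0 = x" by (simp add: f_def scaleC_one)
    also have "f n = (S ^^ n) x"
    proof -
      have "w ^ (k * n) = 1" by (metis power_mult mult.commute wn power_one)
      then show ?thesis by (simp add: f_def scaleC_one)
    qed
    finally show ?thesis .
  qed
  have sumY: "(\<Sum>k<n. Y k) = scaleC (of_nat n) x"
  proof -
    have "(\<Sum>k<n. Y k) = (\<Sum>m<n. \<Sum>k<n. scaleC (w ^ (k * m)) ((S ^^ m) x))"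
      unfolding Y_def by (rule sum.swap)
    also have "\<dots> = (\<Sum>m<n. scaleC (\<Sum>k<n. (w ^ m) ^ k) ((S ^^ m) x))"
      by (simp add: scaleC_sum_left mult.commute power_mult)
    also have "\<dots> = (\<Sum>m<n. if m = 0 then scaleC (of_nat n) x else 0)"
    proof (rule sum.cong)
      fix m assume "m \<in> {..<n}"
      then show "scaleC (\<Sum>k<n. (w ^ m) ^ k) ((S ^^ m) x) = (if m = 0 then scaleC (of_nat n) x else 0)"
        using root_unity_sum[of m n] by (auto simp: w_def)
    qed simp
    also have "\<dots> = scaleC (of_nat n) x" using n by (simp add: sum.delta)
    finally show ?thesis .
  qed
  have pos: "0 \<le> Re (cinner (Y k - scaleC (w ^ k) (S (Y k))) (Y k))" for k
    unfolding S_def a_def by (rule re_part_nonneg[OF r bnd normw normz])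
  have key: "(\<Sum>k<n. cinner (Y k - scaleC (w ^ k) (S (Y k))) (Y k))
      = of_nat n * cinner (x - (S ^^ n) x) x"
    by (simp add: tele flip: cinner_sum_right) (simp add: sumY cinner_scaleC_right)
  have "0 \<le> Re (\<Sum>k<n. cinner (Y k - scaleC (w ^ k) (S (Y k))) (Y k))"
    unfolding Re_sum by (rule sum_nonneg) (use pos in auto)
  then have "0 \<le> real n * Re (cinner (x - (S ^^ n) x) x)" unfolding key by simp
  then have "0 \<le> Re (cinner (x - (S ^^ n) x) x)" using n by (simp add: zero_le_mult_iff)
  then have ineq: "Re (cinner ((S ^^ n) x) x) \<le> (norm x)\<^sup>2"
    by (simp add: cinner_diff_left cinner_self_norm)
  have "cinner ((S ^^ n) x) x = a ^ n * c" by (simp add: Spow cinner_scaleC_left c_def)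
  also have "a ^ n = cis (- Arg c) / complex_of_real (r ^ n)"
    using n by (simp add: a_def z_def power_divide Complex.DeMoivre)
  also have "cis (- Arg c) / complex_of_real (r ^ n) * c = complex_of_real (cmod c / r ^ n)"
  proof -
    have "c = complex_of_real (cmod c) * cis (Arg c)" by (metis rcis_cmod_Arg rcis_def)
    then have "cis (- Arg c) * c = complex_of_real (cmod c)"
      by (metis cis_mult mult.left_commute add.left_inverse cis_zero mult.right_neutral)
    then show ?thesis by (simp add: field_simps)
  qed
  finally have "cmod c / r ^ n \<le> (norm x)\<^sup>2" using ineq by simp
  then show ?thesis using r by (simp add: c_def divide_le_eq mult.commute)
qed


lemma power_ineq:
  fixes T :: "'b::complex_hilbert \<Rightarrow> 'b"
  assumes lin: "lin T" and r: "0 \<le> r"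
    and bnd: "\<And>y. cmod (cinner (T y) y) \<le> r * (norm y)\<^sup>2" and n: "1 \<le> n"
  shows "cmod (cinner ((T ^^ n) x) x) \<le> r ^ n * (norm x)\<^sup>2"
proof (rule ccontr)
  define C where "C = cmod (cinner ((T ^^ n) x) x)"
  define N where "N = (norm x)\<^sup>2"
  assume "\<not> ?thesis"
  then have CN: "r ^ n * N < C" by (simp add: C_def N_def)
  have "x \<noteq> 0"
  proof
    assume "x = 0"
    then have "C = 0" using lin_zero[OF lin_funpow[OF lin]] by (simp add: C_def)
    then show False using CN r by (simp add: N_def \<open>x = 0\<close>)
  qed
  then have Npos: "0 < N" by (simp add: N_def)
  define q where "q = C / N"
  have rq: "r ^ n < q" using CN Npos by (simp add: q_def pos_less_divide_eq)
  have n0: "0 < n" using n by simp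
  have qpos: "0 < q" using rq r by (meson le_less_trans zero_le_power)
  have "r < root n q"
    using real_root_less_mono[OF n0 rq] real_root_power_cancel[OF n0 r] by simp
  define s where "s = (r + root n q) / 2"
  have rs: "r < s" "s < root n q" using \<open>r < root n q\<close> by (auto simp: s_def)
  have spos: "0 < s" using rs r by simp
  have bnd': "cmod (cinner (T y) y) \<le> s * (norm y)\<^sup>2" for y
    using bnd[of y] rs(1) by (meson le_less_trans less_le mult_right_mono order_trans zero_le_power2)
  have "C \<le> s ^ n * N" using power_ineq_pos[OF lin spos bnd' n] by (simp add: C_def N_def)
  also have "s ^ n < (root n q) ^ n"
    using rs spos n0 by (intro power_strict_mono) auto
  then have "s ^ n * N < (root n q) ^ n * N" using Npos by simp
  also have "(root n q) ^ n * N = C" using real_root_pow_pos[OF n0 qpos] Npos by (simp add: q_def)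
  finally show False by simp
qed

section \<open>Numerical radius facts\<close>

lemma numrad_bdd:
  fixes T :: "'b::complex_hilbert \<Rightarrow> 'b"
  assumes "\<And>x. norm (T x) \<le> K * norm x"
  shows "bdd_above (insert 0 {cmod (cinner (T x) x) | x. norm x = 1})"
proof -
  have "z \<le> max K 0" if "z \<in> insert 0 {cmod (cinner (T x) x) | x. norm x = 1}" for z
  proof -
    { fix x :: 'b assume x: "norm x = 1"
      have "cmod (cinner (T x) x) \<le> norm (T x)" by (rule cinner_unit_bound[OF x])
      also have "\<dots> \<le> K" using assms[of x] x by simp
      finally have "cmod (cinner (T x) x) \<le> max K 0" by simp }
    then show ?thesis using that by auto
  qed
  then show ?thesis by (rule bdd_aboveI)
qed

lemma numrad_nonneg:
  fixes T :: "'b::complex_hilbert \<Rightarrow> 'b"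
  assumes "\<And>x. norm (T x) \<le> K * norm x"
  shows "0 \<le> numrad T"
  unfolding numrad_def by (rule cSup_upper[OF _ numrad_bdd[OF assms]]) simp

lemma numrad_bound:
  fixes T :: "'b::complex_hilbert \<Rightarrow> 'b"
  assumes lin: "lin T" and K: "\<And>x. norm (T x) \<le> K * norm x"
  shows "cmod (cinner (T y) y) \<le> numrad T * (norm y)\<^sup>2"
proof (cases "y = 0")
  case True then show ?thesis using lin_zero[OF lin] by simp
next
  case False
  define x where "x = scaleR (1 / norm y) y"
  have nx: "norm x = 1" using False by (simp add: x_def)
  have "cmod (cinner (T x) x) \<le> numrad T"
    unfolding numrad_def by (rule cSup_upper[OF _ numrad_bdd[OF K]]) (use nx in auto)
  moreover have "cinner (T x) x = complex_of_real ((1 / norm y)^2) * cinner (T y) y"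
    by (simp add: x_def lin_scaleR[OF lin] cinner_scaleR_left cinner_scaleR_right power2_eq_square)
  ultimately have "cmod (cinner (T y) y) / (norm y)^2 \<le> numrad T"
    by (simp add: norm_mult norm_divide power2_eq_square)
  then show ?thesis using False by (simp add: divide_le_eq)
qed

lemma numrad_le:
  fixes T :: "'b::complex_hilbert \<Rightarrow> 'b"
  assumes "0 \<le> c" and "\<And>x. norm x = 1 \<Longrightarrow> cmod (cinner (T x) x) \<le> c"
  shows "numrad T \<le> c"
  unfolding numrad_def by (rule cSup_least) (use assms in auto)


theorem theorem4p7:
  fixes A B :: "'a::complex_hilbert \<Rightarrow> 'a" and n :: nat
  assumes "bounded_op A" and "bounded_op B" and "n \<ge> 1"
  shows "numrad_sum (opmat (\<lambda>_. 0) A B (\<lambda>_. 0))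
           \<ge> root (2 * n) (max (numrad ((A \<circ> B) ^^ n)) (numrad ((B \<circ> A) ^^ n)))"
proof -
  define T where "T = opmat (\<lambda>_. 0) A B (\<lambda>_. 0)"
  have Tp: "T p = (A (snd p), B (fst p))" for p
    by (cases p) (simp add: T_def opmat_def)
  obtain KA where KA: "\<And>x. norm (A x) \<le> KA * norm x" using assms(1) bounded_op_def by blast
  obtain KB where KB: "\<And>x. norm (B x) \<le> KB * norm x" using assms(2) bounded_op_def by blast
  have linA: "lin A" using assms(1) by (simp add: bounded_op_def lin_def)
  have linB: "lin B" using assms(2) by (simp add: bounded_op_def lin_def)
  have linT: "lin T"
    unfolding lin_def Tp by (simp add: lin_add[OF linA] lin_add[OF linB] lin_scaleC[OF linA] lin_scaleC[OF linB] scaleC_prod_def)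
  define K where "K = max (max KA KB) 0"
  have KT: "norm (T p) \<le> (2 * K) * norm p" for p
  proof -
    have "norm (T p) \<le> norm (A (snd p)) + norm (B (fst p))"
      unfolding Tp by (rule norm_Pair_le)
    also have "norm (A (snd p)) \<le> K * norm p"
    proof -
      have "norm (A (snd p)) \<le> KA * norm (snd p)" by (rule KA)
      also have "\<dots> \<le> K * norm (snd p)" by (intro mult_right_mono) (auto simp: K_def)
      also have "\<dots> \<le> K * norm p"
        by (intro mult_left_mono) (auto simp: K_def norm_snd_le[of "snd p" "fst p", simplified])
      finally show ?thesis .
    qed
    also have "norm (B (fst p)) \<le> K * norm p"
    proof -
      have "norm (B (fst p)) \<le> KB * norm (fst p)" by (rule KB)
      also have "\<dots> \<le> K * norm (fst p)" by (intro mult_right_mono) (auto simp: K_def)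
      also have "\<dots> \<le> K * norm p"
        by (intro mult_left_mono) (auto simp: K_def norm_fst_le[of "fst p" "snd p", simplified])
      finally show ?thesis .
    qed
    finally show ?thesis by simp
  qed
  have eqsum: "numrad_sum T = numrad T"
    by (simp add: numrad_sum_def numrad_def norm_sum_def cinner_sum_def norm_prod_def cinner_prod_def)
  define w where "w = numrad T"
  have w0: "0 \<le> w" unfolding w_def by (rule numrad_nonneg[OF KT])
  have wb: "cmod (cinner (T p) p) \<le> w * (norm p)\<^sup>2" for p
    unfolding w_def by (rule numrad_bound[OF linT KT])
  have n2: "1 \<le> 2 * n" using assms(3) by simp
  have pw: "cmod (cinner ((T ^^ (2 * n)) p) p) \<le> w ^ (2 * n) * (norm p)\<^sup>2" for p
    by (rule power_ineq[OF linT w0 wb n2])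
  have Tpow: "(T ^^ (2 * m)) (x, y) = (((A \<circ> B) ^^ m) x, ((B \<circ> A) ^^ m) y)" for m x y
  proof (induction m)
    case 0 then show ?case by simp
  next
    case (Suc m)
    have "2 * Suc m = Suc (Suc (2 * m))" by simp
    then show ?case using Suc by (simp add: Tp)
  qed
  have b1: "numrad ((A \<circ> B) ^^ n) \<le> w ^ (2 * n)"
  proof (rule numrad_le)
    fix u :: 'a assume u: "norm u = 1"
    have "norm (u, 0::'a) = 1" using u by (simp add: norm_prod_def)
    then show "cmod (cinner (((A \<circ> B) ^^ n) u) u) \<le> w ^ (2 * n)"
      using pw[of "(u, 0)"] by (simp add: Tpow cinner_prod_def)
  qed (simp add: w0)
  have b2: "numrad ((B \<circ> A) ^^ n) \<le> w ^ (2 * n)"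
  proof (rule numrad_le)
    fix u :: 'a assume u: "norm u = 1"
    have "norm (0::'a, u) = 1" using u by (simp add: norm_prod_def)
    then show "cmod (cinner (((B \<circ> A) ^^ n) u) u) \<le> w ^ (2 * n)"
      using pw[of "(0, u)"] by (simp add: Tpow cinner_prod_def)
  qed (simp add: w0)
  have "root (2 * n) (max (numrad ((A \<circ> B) ^^ n)) (numrad ((B \<circ> A) ^^ n))) \<le> root (2 * n) (w ^ (2 * n))"
    using b1 b2 n2 by (intro real_root_le_mono) auto
  also have "\<dots> = w" using n2 w0 by (intro real_root_power_cancel) auto
  finally show ?thesis using eqsum by (simp add: T_def w_def)
qed

end
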